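(* Let $(\Omega,\mathcal{F},P,T)$ be a measure preserving system. The following are equivalent: (i) $P$ is weakly mixing; (ii) for every $r>0$, $\lim_{n\to\infty}\frac{1}{n}\sum_{i=0}^{n-1}P^r(B\cap T^{-i}C)=P^r(B)P^r(C)$ for all $B,C\in\mathcal{F}$; (iii) for all $B,C\in\mathcal{F}$, $\lim_{n\to\infty}\frac{1}{n}\sum_{i=0}^{n-1}P(B\cap T^{-i}C)=P(B)P(C)$, and there exists $r=r_{B,C}\in(0,1/2]$ such that $\lim_{n\to\infty}\frac{1}{n}\sum_{i=0}^{n-1}P^r(B\cap T^{-i}C)=P^r(B)P^r(C)$. In particular, $P$ is weakly mixing if and only if $P$ is ergodic and $\lim_{n\to\infty}\frac{1}{n}\sum_{i=0}^{n-1}P^{1/2}(B\cap T^{-i}C)=P^{1/2}(B)P^{1/2}(C)$ for all $B,C\in\mathcal{F}$.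
   Context: A measure preserving system $(\Omega,\mathcal{F},P,T)$ consists of a probability space and a measurable $T:\Omega\to\Omega$ with $P(T^{-1}A)=P(A)$ for all $A\in\mathcal{F}$. $P^r(A)$ denotes $(P(A))^r$. $P$ is ergodic if $P(A)\in\{0,1\}$ whenever $T^{-1}A=A$; weakly mixing if $P\times P$ is ergodic for $T\times T$. *)

theory Defs
  imports "HOL-Probability.Probability"
begin

definition mps :: "'a measure \<Rightarrow> ('a \<Rightarrow> 'a) \<Rightarrow> bool" where
  "mps M T \<longleftrightarrow> prob_space M \<and> T \<in> M \<rightarrow>\<^sub>M M \<and>
     (\<forall>A\<in>sets M. measure M (T -` A \<inter> space M) = measure M A)"

definition ergodic :: "'a measure \<Rightarrow> ('a \<Rightarrow> 'a) \<Rightarrow> bool" where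
  "ergodic M T \<longleftrightarrow>
     (\<forall>A\<in>sets M. T -` A \<inter> space M = A \<longrightarrow> measure M A = 0 \<or> measure M A = 1)"

definition weakly_mixing :: "'a measure \<Rightarrow> ('a \<Rightarrow> 'a) \<Rightarrow> bool" where
  "weakly_mixing M T \<longleftrightarrow> ergodic (M \<Otimes>\<^sub>M M) (\<lambda>(x, y). (T x, T y))"

definition cesaro_pow :: "'a measure \<Rightarrow> ('a \<Rightarrow> 'a) \<Rightarrow> real \<Rightarrow> 'a set \<Rightarrow> 'a set \<Rightarrow> bool" where
  "cesaro_pow M T r B C \<longleftrightarrow>
     (\<lambda>n. (\<Sum>i<n. measure M (B \<inter> ((T ^^ i) -` C \<inter> space M)) powr r) / real n)
       \<longlonglongrightarrow> (measure M B powr r) * (measure M C powr r)"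

definition cesaro :: "'a measure \<Rightarrow> ('a \<Rightarrow> 'a) \<Rightarrow> 'a set \<Rightarrow> 'a set \<Rightarrow> bool" where
  "cesaro M T B C \<longleftrightarrow>
     (\<lambda>n. (\<Sum>i<n. measure M (B \<inter> ((T ^^ i) -` C \<inter> space M))) / real n)
       \<longlonglongrightarrow> measure M B * measure M C"

end

theory Submission
  imports Defs
begin



locale mp_sys = prob_space M for M :: "'a measure" +
  fixes T :: "'a \<Rightarrow> 'a"
  assumes Tm[measurable]: "T \<in> M \<rightarrow>\<^sub>M M"
    and Tp: "\<And>A. A\<in>sets M \<Longrightarrow> measure M (T -` A \<inter> space M) = measure M A"
begin

lemma distr_T: "distr M M T = M"
proof (rule measure_eqI)
  fix A assume "A \<in> sets (distr M M T)"
  then have A: "A \<in> sets M" by simp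
  have "emeasure (distr M M T) A = emeasure M (T -` A \<inter> space M)"
    using A by (simp add: emeasure_distr)
  also have "\<dots> = emeasure M A" using A Tp[OF A]
    by (simp add: emeasure_eq_measure)
  finally show "emeasure (distr M M T) A = emeasure M A" .
qed simp

lemma Tn_meas[measurable]: "(T^^n) \<in> M \<rightarrow>\<^sub>M M"
  by (rule measurable_compose_n[OF Tm])

lemma distr_Tn: "distr M M (T^^n) = M"
proof (induction n)
  case 0 then show ?case by (simp add: distr_id2[symmetric] id_def)
next
  case (Suc n)
  have "distr M M (T^^Suc n) = distr M M (T \<circ> T^^n)" by simp
  also have "\<dots> = distr (distr M M (T^^n)) M T"
    by (rule distr_distr[symmetric]) auto
  also have "\<dots> = M" using Suc distr_T by simp
  finally show ?case .
qed

lemma Tn_space: "x \<in> space M \<Longrightarrow> (T^^n) x \<in> space M"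
  using measurable_space[OF Tn_meas] by blast

lemma meas_Tn: "A \<in> sets M \<Longrightarrow> measure M ((T^^n) -` A \<inter> space M) = measure M A"
proof -
  assume A: "A \<in> sets M"
  have "measure (distr M M (T^^n)) A = measure M ((T^^n) -` A \<inter> space M)"
    using A by (simp add: measure_distr)
  then show ?thesis using distr_Tn by simp
qed

lemma int_Tn: "(g::'a\<Rightarrow>real) \<in> borel_measurable M \<Longrightarrow> integral\<^sup>L M (\<lambda>x. g ((T^^n) x)) = integral\<^sup>L M g"
proof -
  assume g: "g \<in> borel_measurable M"
  have "integral\<^sup>L (distr M M (T^^n)) g = integral\<^sup>L M (\<lambda>x. g ((T^^n) x))"
    by (rule integral_distr) (auto simp: g)
  then show ?thesis using distr_Tn by simp
qed

lemma S_Suc: "(\<Sum>i<Suc k. g ((T^^i) x)) = g x + (\<Sum>i<k. g ((T^^i) (T x)))"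
  unfolding sum.lessThan_Suc_shift by (simp add: funpow_swap1)

lemma maximal_ergodic:
  fixes g :: "'a \<Rightarrow> real"
  assumes g[measurable]: "g \<in> borel_measurable M" and bnd: "\<And>x. x\<in>space M \<Longrightarrow> \<bar>g x\<bar> \<le> K"
  shows "integral\<^sup>L M (\<lambda>x. indicator {x\<in>space M. \<exists>n. (\<Sum>i<n. g ((T^^i) x)) > 0} x * g x) \<ge> 0"
proof -
  define S where "S n x = (\<Sum>i<n. g ((T^^i) x))" for n x
  define Mx where "Mx N x = Max ((\<lambda>k. S k x) ` {..N})" for N x
  have K0: "0 \<le> K" using bnd[of "SOME x. x \<in> space M"] not_empty
    by (metis abs_ge_zero order_trans some_in_eq)
  have S_meas[measurable]: "S n \<in> borel_measurable M" for n unfolding S_def by measurable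
  have Mx_meas[measurable]: "Mx N \<in> borel_measurable M" for N unfolding Mx_def by measurable
  have S_bnd: "\<bar>S n x\<bar> \<le> real n * K" if "x \<in> space M" for n x
  proof -
    have "\<bar>S n x\<bar> \<le> (\<Sum>i<n. \<bar>g ((T^^i) x)\<bar>)" unfolding S_def by (rule sum_abs)
    also have "\<dots> \<le> (\<Sum>i<n. K)" by (intro sum_mono bnd Tn_space that)
    finally show ?thesis by simp
  qed
  have Mx_ge: "S k x \<le> Mx N x" if "k \<le> N" for k N x
    unfolding Mx_def using that by (intro Max_ge) auto
  have Mx_in: "\<exists>k\<le>N. Mx N x = S k x" for N x
  proof -
    have "Mx N x \<in> (\<lambda>k. S k x) ` {..N}" unfolding Mx_def by (intro Max_in) auto
    then show ?thesis by auto
  qed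
  have Mx0: "0 \<le> Mx N x" for N x using Mx_ge[of 0 N x] by (simp add: S_def)
  have Mx_bnd: "\<bar>Mx N x\<bar> \<le> real N * K" if "x \<in> space M" for N x
  proof -
    obtain k where "k \<le> N" "Mx N x = S k x" using Mx_in by blast
    then have "\<bar>Mx N x\<bar> \<le> real k * K" using S_bnd that by simp
    also have "\<dots> \<le> real N * K" using \<open>k \<le> N\<close> K0 by (simp add: mult_right_mono)
    finally show ?thesis .
  qed
  have Mx_int: "integrable M (Mx N)" for N
    by (rule integrable_const_bound[where B="real N * K"]) (auto simp: Mx_bnd)
  have MxT_int: "integrable M (\<lambda>x. Mx N (T x))" for N
    by (rule integrable_const_bound[where B="real N * K"])
       (auto intro!: Mx_bnd measurable_space[OF Tm])
  define P where "P N = {x\<in>space M. \<exists>k\<le>N. S k x > 0}" for N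
  have P_sets[measurable]: "P N \<in> sets M" for N unfolding P_def by measurable
  have pw: "Mx N x - Mx N (T x) \<le> indicator (P N) x * g x" if x: "x \<in> space M" for N x
  proof (cases "x \<in> P N")
    case True
    obtain k where k: "k \<le> N" "Mx N x = S k x" using Mx_in by blast
    have "Mx N x > 0" using True Mx_ge unfolding P_def by (auto intro: less_le_trans)
    moreover have "S 0 x = 0" by (simp add: S_def)
    ultimately have "k \<noteq> 0" using k by (metis less_irrefl)
    then obtain j where j: "k = Suc j" by (cases k) auto
    have "Mx N x = g x + S j (T x)" using k j S_Suc[where g=g and k=j and x=x] by (simp only: S_def)
    also have "\<dots> \<le> g x + Mx N (T x)" using Mx_ge[of j N "T x"] j k by simp
    finally show ?thesis using True by simp
  next
    case False
    then have "\<not> Mx N x > 0" using Mx_in[of N x] x unfolding P_def by auto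
    then show ?thesis using False Mx0[of N x] Mx0[of N "T x"] by simp
  qed
  have ge0: "integral\<^sup>L M (\<lambda>x. indicator (P N) x * g x) \<ge> 0" for N
  proof -
    have "integral\<^sup>L M (\<lambda>x. Mx N x - Mx N (T x)) = integral\<^sup>L M (Mx N) - integral\<^sup>L M (\<lambda>x. Mx N (T x))"
      using Mx_int MxT_int by simp
    also have "integral\<^sup>L M (\<lambda>x. Mx N (T x)) = integral\<^sup>L M (Mx N)"
      using int_Tn[of "Mx N" 1] by simp
    finally have "integral\<^sup>L M (\<lambda>x. Mx N x - Mx N (T x)) = 0" by simp
    moreover have "integral\<^sup>L M (\<lambda>x. Mx N x - Mx N (T x)) \<le> integral\<^sup>L M (\<lambda>x. indicator (P N) x * g x)"
    proof (rule integral_mono)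
      show "integrable M (\<lambda>x. indicator (P N) x * g x)"
        by (rule integrable_const_bound[where B=K]) (auto simp: bnd indicator_def K0)
    qed (use Mx_int MxT_int pw in auto)
    ultimately show ?thesis by simp
  qed
  let ?P = "{x\<in>space M. \<exists>n. (\<Sum>i<n. g ((T^^i) x)) > 0}"
  have "(\<lambda>N. integral\<^sup>L M (\<lambda>x. indicator (P N) x * g x)) \<longlonglongrightarrow> integral\<^sup>L M (\<lambda>x. indicator ?P x * g x)"
  proof (rule integral_dominated_convergence[where w="\<lambda>x. K"])
    show "(\<lambda>x. indicator ?P x * g x) \<in> borel_measurable M"
    proof -
      have "?P = (\<Union>n. {x\<in>space M. S n x > 0})" by (auto simp: S_def)
      moreover have "(\<Union>n. {x\<in>space M. S n x > 0}) \<in> sets M" by measurable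
      ultimately show ?thesis by simp
    qed
    show "AE x in M. (\<lambda>N. indicator (P N) x * g x) \<longlonglongrightarrow> indicator ?P x * g x"
    proof (rule AE_I2)
      fix x assume x: "x \<in> space M"
      show "(\<lambda>N. indicator (P N) x * g x) \<longlonglongrightarrow> indicator ?P x * g x"
      proof (cases "x \<in> ?P")
        case True
        then obtain n where n: "S n x > 0" by (auto simp: S_def)
        have "eventually (\<lambda>N. indicator (P N) x * g x = indicator ?P x * g x) sequentially"
          using eventually_ge_at_top[of n]
        proof eventually_elim
          case (elim N)
          then have "x \<in> P N" using n x unfolding P_def by blast
          then show ?case using True by simp
        qed
        then show ?thesis by (rule tendsto_eventually)
      next
        case False
        then have "x \<notin> P N" for N by (auto simp: P_def S_def)
        then show ?thesis using False by simp
      qed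
    qed
    show "AE x in M. norm (indicator (P N) x * g x) \<le> K" for N
      by (rule AE_I2) (auto simp: bnd indicator_def K0)
  qed auto
  then show ?thesis by (rule LIMSEQ_le_const) (use ge0 in auto)
qed

end

lemma mps_imp: "mps M T \<Longrightarrow> mp_sys M T"
  unfolding mps_def mp_sys_def mp_sys_axioms_def by auto




context mp_sys begin

definition avg :: "'a set \<Rightarrow> nat \<Rightarrow> 'a \<Rightarrow> real" where
  "avg C n x = (\<Sum>i<n. indicator C ((T^^i) x)) / real n"

lemma avg_meas[measurable]: assumes [measurable]: "C \<in> sets M" shows "avg C n \<in> borel_measurable M"
  unfolding avg_def by measurable

lemma avg_bnd: "0 \<le> avg C n x \<and> avg C n x \<le> 1"
proof -
  have "(\<Sum>i<n. indicator C ((T^^i) x)) \<le> (\<Sum>i<n. 1::real)"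
    by (intro sum_mono) (simp add: indicator_def)
  then show ?thesis unfolding avg_def
    by (auto simp: divide_le_eq_1 sum_nonneg)
qed

lemma inv_iter: assumes "T -` E \<inter> space M = E" "x \<in> space M"
  shows "(T^^i) x \<in> E \<longleftrightarrow> x \<in> E"
proof (induction i)
  case (Suc i)
  have sp: "(T^^i) x \<in> space M" using Tn_space assms(2) by simp
  have "(T^^Suc i) x \<in> E \<longleftrightarrow> (T^^i) x \<in> T -` E \<inter> space M" using sp by simp
  then have "(T^^Suc i) x \<in> E \<longleftrightarrow> (T^^i) x \<in> E" by (simp only: assms(1))
  then show ?case using Suc by simp
qed simp

lemma limsup_avg_T:
  assumes x: "x \<in> space M"
  shows "limsup (\<lambda>n. ereal (avg C n (T x))) = limsup (\<lambda>n. ereal (avg C n x))"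
proof -
  define s where "s n = (\<Sum>i<n. indicator C ((T^^i) x) :: real)" for n
  define d where "d n = avg C n (T x) - avg C (n+1) x" for n
  have sT: "(\<Sum>i<n. indicator C ((T^^i) (T x))) = s (Suc n) - indicator C x" for n
    using S_Suc[where g="indicator C :: 'a \<Rightarrow> real" and k=n and x=x] unfolding s_def by simp
  have s_bnd: "0 \<le> s n \<and> s n \<le> real n" for n
  proof -
    have "s n \<le> (\<Sum>i<n. 1::real)" unfolding s_def by (intro sum_mono) (simp add: indicator_def)
    then show ?thesis unfolding s_def by (auto simp: sum_nonneg)
  qed
  have d_bnd: "\<bar>d n\<bar> \<le> 2 / real n" if "n \<ge> 1" for n
  proof -
    have e1: "avg C n (T x) = (s (Suc n) - indicator C x) / real n"
      unfolding avg_def sT by simp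
    have e2: "avg C (n+1) x = s (Suc n) / real (Suc n)"
      unfolding avg_def s_def by simp
    have aux: "(t - c) / m - t / (1 + m) = t / (m * (1 + m)) - c / m" if "m > 0" for t c m :: real
      using that by (simp add: divide_simps) (simp add: algebra_simps)
    have eq: "d n = s (Suc n) / (real n * real (Suc n)) - indicator C x / real n"
      unfolding d_def e1 e2 using aux[of "real n" "s (Suc n)" "indicator C x"] that by simp
    have "s (Suc n) / (real n * real (Suc n)) \<le> real (Suc n) / (real n * real (Suc n))"
      using s_bnd[of "Suc n"] that by (intro divide_right_mono) auto
    also have "\<dots> = 1 / real n" by simp
    finally have b1: "\<bar>s (Suc n) / (real n * real (Suc n))\<bar> \<le> 1 / real n"
      using s_bnd[of "Suc n"] by simp
    have b2: "\<bar>indicator C x / real n\<bar> \<le> 1 / real n"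
      using that by (auto simp: indicator_def field_simps)
    have "\<bar>d n\<bar> \<le> \<bar>s (Suc n) / (real n * real (Suc n))\<bar> + \<bar>indicator C x / real n\<bar>"
      unfolding eq by (rule abs_triangle_ineq4)
    also have "\<dots> \<le> 1 / real n + 1 / real n" using b1 b2 by (rule add_mono)
    also have "\<dots> = 2 / real n" by simp
    finally show ?thesis .
  qed
  have "d \<longlonglongrightarrow> 0"
  proof (rule Lim_null_comparison[where g="\<lambda>n. 2 / real n"])
    show "eventually (\<lambda>n. norm (d n) \<le> 2 / real n) sequentially"
      using eventually_ge_at_top[of 1] by eventually_elim (use d_bnd in auto)
    show "(\<lambda>n. 2 / real n) \<longlonglongrightarrow> 0" by (rule lim_const_over_n)
  qed
  then have dl: "(\<lambda>n. ereal (d n)) \<longlonglongrightarrow> ereal 0" by (simp add: tendsto_ereal)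
  have "limsup (\<lambda>n. ereal (avg C n (T x))) = limsup (\<lambda>n. ereal (d n) + ereal (avg C (n+1) x))"
    by (intro arg_cong[where f=limsup] ext) (simp add: d_def)
  also have "\<dots> = ereal 0 + limsup (\<lambda>n. ereal (avg C (n+1) x))"
    by (rule ereal_limsup_lim_add[OF dl]) simp
  also have "\<dots> = limsup (\<lambda>n. ereal (avg C (n+1) x))"
    by (simp only: zero_ereal_def[symmetric] add_0_left)
  also have "\<dots> = limsup (\<lambda>n. ereal (avg C n x))"
    by (rule limsup_shift)
  finally show ?thesis .
qed

end

locale erg_sys = mp_sys +
  assumes erg: "\<And>A. A \<in> sets M \<Longrightarrow> T -` A \<inter> space M = A \<Longrightarrow> prob A = 0 \<or> prob A = 1"
begin

lemma upper_ae:
  assumes C[measurable]: "C \<in> sets M" and a: "prob C < a"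
  shows "AE x in M. limsup (\<lambda>n. ereal (avg C n x)) \<le> ereal a"
proof -
  define L where "L x = limsup (\<lambda>n. ereal (avg C n x))" for x
  have L_meas[measurable]: "L \<in> borel_measurable M" unfolding L_def by measurable
  define E where "E = {x\<in>space M. ereal a < L x}"
  have E_sets[measurable]: "E \<in> sets M" unfolding E_def by measurable
  have E_inv: "T -` E \<inter> space M = E"
    using limsup_avg_T measurable_space[OF Tm] unfolding E_def L_def by auto
  have "prob E = 0"
  proof (rule ccontr)
    assume "prob E \<noteq> 0"
    then have E1: "prob E = 1" using erg[OF E_sets E_inv] by simp
    define g where "g x = indicator E x * (indicator C x - a)" for x
    have g_meas[measurable]: "g \<in> borel_measurable M" unfolding g_def by measurable
    have gb: "\<bar>g x\<bar> \<le> 1 + \<bar>a\<bar>" for x unfolding g_def by (auto simp: indicator_def)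
    have set_eq: "{x\<in>space M. \<exists>n. (\<Sum>i<n. g ((T^^i) x)) > 0} = E"
    proof (intro set_eqI iffI)
      fix x assume "x \<in> {x\<in>space M. \<exists>n. (\<Sum>i<n. g ((T^^i) x)) > 0}"
      then obtain n where x: "x \<in> space M" and n: "(\<Sum>i<n. g ((T^^i) x)) > 0" by auto
      show "x \<in> E"
      proof (rule ccontr)
        assume "x \<notin> E"
        then have "g ((T^^i) x) = 0" for i using inv_iter[OF E_inv x] by (simp add: g_def)
        then show False using n by simp
      qed
    next
      fix x assume xE: "x \<in> E"
      then have x: "x \<in> space M" unfolding E_def by auto
      have "\<exists>n. avg C n x > a"
      proof (rule ccontr)
        assume "\<not> (\<exists>n. avg C n x > a)"
        then have "L x \<le> ereal a" unfolding L_def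
          by (intro Limsup_bounded) (auto simp: not_less)
        then show False using xE unfolding E_def by auto
      qed
      then obtain n where n: "avg C n x > a" by auto
      have a0: "a > 0" using a measure_nonneg[of M C] by linarith
      have "n \<noteq> 0"
      proof
        assume "n = 0" then have "avg C n x = 0" by (simp add: avg_def)
        then show False using n a0 by simp
      qed
      have "(\<Sum>i<n. g ((T^^i) x)) = (\<Sum>i<n. indicator C ((T^^i) x) - a)"
        using inv_iter[OF E_inv x] xE by (simp add: g_def)
      also have "\<dots> = real n * (avg C n x - a)"
        using \<open>n \<noteq> 0\<close> by (simp add: avg_def sum_subtractf field_simps)
      also have "\<dots> > 0" using n \<open>n \<noteq> 0\<close> by simp
      finally show "x \<in> {x\<in>space M. \<exists>n. (\<Sum>i<n. g ((T^^i) x)) > 0}" using x by auto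
    qed
    have "integral\<^sup>L M (\<lambda>x. indicator E x * g x) \<ge> 0"
      using maximal_ergodic[OF g_meas, of "1 + \<bar>a\<bar>"] gb unfolding set_eq by simp
    moreover have "AE x in M. x \<in> E"
      using E1 by (intro prob_space.AE_prob_1) (auto simp: prob_space_axioms)
    then have "integral\<^sup>L M (\<lambda>x. indicator E x * g x) = integral\<^sup>L M (\<lambda>x. indicator C x - a)"
      by (intro integral_cong_AE) (auto simp: g_def)
    moreover have "integral\<^sup>L M (\<lambda>x. indicator C x - a) = integral\<^sup>L M (indicator C) - integral\<^sup>L M (\<lambda>x. a)"
      by (rule Bochner_Integration.integral_diff) (use C in \<open>auto intro!: integrable_real_indicator simp: less_top[symmetric]\<close>)
    then have "integral\<^sup>L M (\<lambda>x. indicator C x - a) = prob C - a"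
      using C by (simp add: prob_space)
    ultimately show False using a by simp
  qed
  then have "E \<in> null_sets M" by (simp add: null_sets_def emeasure_eq_measure)
  then have "AE x in M. x \<notin> E"
    by (rule AE_not_in)
  then show ?thesis by (rule AE_mp) (auto simp: E_def L_def intro!: AE_I2)
qed

end



context erg_sys begin

lemma upper_ev:
  assumes C[measurable]: "C \<in> sets M" and b: "prob C < b"
  shows "AE x in M. eventually (\<lambda>n. avg C n x < b) sequentially"
proof -
  have "AE x in M. limsup (\<lambda>n. ereal (avg C n x)) \<le> ereal ((prob C + b) / 2)"
    using b by (intro upper_ae) auto
  then show ?thesis
  proof (rule AE_mp, intro AE_I2 impI)
    fix x assume "limsup (\<lambda>n. ereal (avg C n x)) \<le> ereal ((prob C + b) / 2)"
    also have "\<dots> < ereal b" using b by simp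
    finally have "eventually (\<lambda>n. ereal (avg C n x) < ereal b) sequentially"
      by (rule Limsup_lessD)
    then show "eventually (\<lambda>n. avg C n x < b) sequentially" by simp
  qed
qed

lemma lower_ev:
  assumes C[measurable]: "C \<in> sets M" and b: "b < prob C"
  shows "AE x in M. eventually (\<lambda>n. b < avg C n x) sequentially"
proof -
  have C': "space M - C \<in> sets M" by measurable
  have "prob (space M - C) = 1 - prob C" using prob_compl[OF C] .
  then have "AE x in M. eventually (\<lambda>n. avg (space M - C) n x < 1 - b) sequentially"
    using b by (intro upper_ev[OF C']) auto
  then show ?thesis
  proof (rule AE_mp, intro AE_I2 impI)
    fix x assume x: "x \<in> space M"
      and ev: "eventually (\<lambda>n. avg (space M - C) n x < 1 - b) sequentially"
    have eq: "avg (space M - C) n x = 1 - avg C n x" if "n \<ge> 1" for n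
    proof -
      have "(\<Sum>i<n. indicator (space M - C) ((T^^i) x) :: real) = (\<Sum>i<n. 1 - indicator C ((T^^i) x))"
        using Tn_space[OF x] by (intro sum.cong) (auto simp: indicator_def)
      then show ?thesis using that unfolding avg_def by (simp add: sum_subtractf diff_divide_distrib)
    qed
    show "eventually (\<lambda>n. b < avg C n x) sequentially"
      using ev eventually_ge_at_top[of 1] by eventually_elim (use eq in auto)
  qed
qed

lemma ae_conv:
  assumes C[measurable]: "C \<in> sets M"
  shows "AE x in M. (\<lambda>n. avg C n x) \<longlonglongrightarrow> prob C"
proof -
  have "AE x in M. \<forall>k::nat. eventually (\<lambda>n. avg C n x < prob C + inverse (real (Suc k))) sequentially
      \<and> eventually (\<lambda>n. prob C - inverse (real (Suc k)) < avg C n x) sequentially"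
    unfolding AE_all_countable by (intro allI AE_conjI upper_ev lower_ev C) auto
  then show ?thesis
  proof (rule AE_mp, intro AE_I2 impI)
    fix x assume H: "\<forall>k::nat. eventually (\<lambda>n. avg C n x < prob C + inverse (real (Suc k))) sequentially
      \<and> eventually (\<lambda>n. prob C - inverse (real (Suc k)) < avg C n x) sequentially"
    show "(\<lambda>n. avg C n x) \<longlonglongrightarrow> prob C"
    proof (rule order_tendstoI)
      fix a assume "a < prob C"
      then obtain k where k: "inverse (real (Suc k)) < prob C - a"
        using reals_Archimedean[of "prob C - a"] by auto
      show "eventually (\<lambda>n. a < avg C n x) sequentially"
        using conjunct2[OF H[rule_format, of k]] by eventually_elim (use k in auto)
    next
      fix a assume "prob C < a"
      then obtain k where k: "inverse (real (Suc k)) < a - prob C"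
        using reals_Archimedean[of "a - prob C"] by auto
      show "eventually (\<lambda>n. avg C n x < a) sequentially"
        using conjunct1[OF H[rule_format, of k]] by eventually_elim (use k in auto)
    qed
  qed
qed

lemma erg_cesaro:
  assumes B[measurable]: "B \<in> sets M" and C[measurable]: "C \<in> sets M"
  shows "(\<lambda>n. (\<Sum>i<n. prob (B \<inter> ((T^^i) -` C \<inter> space M))) / real n) \<longlonglongrightarrow> prob B * prob C"
proof -
  have lim: "(\<lambda>n. integral\<^sup>L M (\<lambda>x. indicator B x * avg C n x)) \<longlonglongrightarrow> integral\<^sup>L M (\<lambda>x. indicator B x * prob C)"
  proof (rule integral_dominated_convergence[where w="\<lambda>x. 1"])
    show "AE x in M. (\<lambda>n. indicator B x * avg C n x) \<longlonglongrightarrow> indicator B x * prob C"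
      using ae_conv[OF C] by eventually_elim (intro tendsto_mult tendsto_const)
    show "AE x in M. norm (indicator B x * avg C n x) \<le> 1" for n
      using avg_bnd[of C n] by (intro AE_I2) (auto simp: indicator_def)
  qed auto
  have int1: "integral\<^sup>L M (\<lambda>x. indicator B x * prob C) = prob B * prob C"
    using B by simp
  have int2: "integral\<^sup>L M (\<lambda>x. indicator B x * avg C n x) =
     (\<Sum>i<n. prob (B \<inter> ((T^^i) -` C \<inter> space M))) / real n" for n
  proof -
    have "integral\<^sup>L M (\<lambda>x. indicator B x * avg C n x) =
        integral\<^sup>L M (\<lambda>x. (\<Sum>i<n. indicator (B \<inter> ((T^^i) -` C \<inter> space M)) x) / real n)"
      by (intro Bochner_Integration.integral_cong refl)
         (auto simp: avg_def indicator_def sum_distrib_left)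
    also have "\<dots> = integral\<^sup>L M (\<lambda>x. (\<Sum>i<n. indicator (B \<inter> ((T^^i) -` C \<inter> space M)) x)) / real n"
      by (rule integral_divide_zero)
    also have "integral\<^sup>L M (\<lambda>x. (\<Sum>i<n. indicator (B \<inter> ((T^^i) -` C \<inter> space M)) x :: real))
        = (\<Sum>i<n. integral\<^sup>L M (indicator (B \<inter> ((T^^i) -` C \<inter> space M))))"
      by (rule Bochner_Integration.integral_sum) (auto intro!: integrable_real_indicator simp: less_top[symmetric])
    also have "\<dots> = (\<Sum>i<n. prob (B \<inter> ((T^^i) -` C \<inter> space M)))"
      by (intro sum.cong refl) (simp add: Int_absorb2 Int_assoc)
    finally show ?thesis .
  qed
  show ?thesis using lim unfolding int1 int2 .
qed

end



definition cav :: "(nat \<Rightarrow> real) \<Rightarrow> nat \<Rightarrow> real" where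
  "cav f n = (\<Sum>i<n. f i) / real n"

lemma cav_const: "n \<ge> 1 \<Longrightarrow> cav (\<lambda>i. k) n = k"
  unfolding cav_def by simp

lemma cav_add: "cav (\<lambda>i. f i + g i) n = cav f n + cav g n"
  unfolding cav_def by (simp add: sum.distrib add_divide_distrib)

lemma cav_diff: "cav (\<lambda>i. f i - g i) n = cav f n - cav g n"
  unfolding cav_def by (simp add: sum_subtractf diff_divide_distrib)

lemma cav_cmult: "cav (\<lambda>i. k * f i) n = k * cav f n"
  unfolding cav_def by (simp add: sum_distrib_left[symmetric])

lemma cav_mono: "(\<And>i. f i \<le> g i) \<Longrightarrow> cav f n \<le> cav g n"
  unfolding cav_def by (intro divide_right_mono sum_mono) auto

lemma cav_nonneg: "(\<And>i. 0 \<le> f i) \<Longrightarrow> 0 \<le> cav f n"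
  unfolding cav_def by (intro divide_nonneg_nonneg sum_nonneg) auto

lemma cav_abs: "\<bar>cav f n\<bar> \<le> cav (\<lambda>i. \<bar>f i\<bar>) n"
  unfolding cav_def by (auto simp: abs_divide intro!: divide_right_mono sum_abs)

lemma cav_const_lim: "(\<lambda>n. cav (\<lambda>i. k) n) \<longlonglongrightarrow> k"
proof (rule tendsto_eventually)
  show "eventually (\<lambda>n. cav (\<lambda>i. k) n = k) sequentially"
    using eventually_ge_at_top[of 1] by eventually_elim (rule cav_const)
qed

lemma cav_CS: "(cav f n)\<^sup>2 \<le> cav (\<lambda>i. (f i)\<^sup>2) n"
proof (cases "n = 0")
  case False
  have "(\<Sum>i<n. f i)\<^sup>2 \<le> (\<Sum>i<n. (f i)\<^sup>2) * real n"
    using sum_squared_le_sum_of_squares[of f "{..<n}"] by simp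
  then show ?thesis using False unfolding cav_def
    by (simp add: power_divide divide_simps power2_eq_square)
qed (simp add: cav_def)

lemma convex_powr_nonneg: assumes "p \<ge> 1" shows "convex_on {0..} (\<lambda>x::real. x powr p)"
proof (rule convex_onI)
  fix t x y :: real assume t: "t > 0" "t < 1" and xy: "x \<in> {0..}" "y \<in> {0..}"
  show "((1 - t) *\<^sub>R x + t *\<^sub>R y) powr p \<le> (1 - t) * x powr p + t * y powr p"
  proof (cases "x > 0 \<and> y > 0")
    case True
    then show ?thesis using convex_onD[OF powr_convex[OF assms], of t x y] t by auto
  next
    case False
    have tp: "t powr p \<le> t" using powr_le_one_le[of t p] t assms by simp
    have tp': "(1 - t) powr p \<le> 1 - t" using powr_le_one_le[of "1 - t" p] t assms by simp
    show ?thesis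
    proof (cases "x = 0")
      case True
      have "(t * y) powr p = t powr p * y powr p" by (rule powr_mult)
      also have "\<dots> \<le> t * y powr p" using tp by (intro mult_right_mono) auto
      finally show ?thesis using True assms by simp
    next
      case False
      then have "y = 0" using \<open>\<not> (x > 0 \<and> y > 0)\<close> xy by auto
      have "((1 - t) * x) powr p = (1 - t) powr p * x powr p" by (rule powr_mult)
      also have "\<dots> \<le> (1 - t) * x powr p" using tp' by (intro mult_right_mono) auto
      finally show ?thesis using \<open>y = 0\<close> assms by simp
    qed
  qed
qed (simp add: convex_real_interval)

lemma cav_jensen:
  assumes q: "q \<ge> 1" and f: "\<And>i. 0 \<le> f i" and n: "n \<ge> 1"
  shows "(cav f n) powr q \<le> cav (\<lambda>i. f i powr q) n"
proof -
  have "(\<Sum>i<n. (1 / real n) *\<^sub>R f i) powr q \<le> (\<Sum>i<n. (1 / real n) * (f i powr q))"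
    using n f by (intro convex_on_sum[OF _ _ convex_powr_nonneg[OF q]]) (auto simp: lessThan_empty_iff)
  then show ?thesis unfolding cav_def
    by (simp add: sum_distrib_left[symmetric] sum_divide_distrib[symmetric])
qed

lemma sq_to_abs:
  assumes "(\<lambda>n. cav (\<lambda>i. (x i)\<^sup>2) n) \<longlonglongrightarrow> 0"
  shows "(\<lambda>n. cav (\<lambda>i. \<bar>x i\<bar>) n) \<longlonglongrightarrow> 0"
proof (rule tendsto_sandwich[where f="\<lambda>n. 0" and h="\<lambda>n. sqrt (cav (\<lambda>i. (x i)\<^sup>2) n)"])
  show "eventually (\<lambda>n. 0 \<le> cav (\<lambda>i. \<bar>x i\<bar>) n) sequentially"
    by (intro always_eventually allI cav_nonneg) simp
  show "eventually (\<lambda>n. cav (\<lambda>i. \<bar>x i\<bar>) n \<le> sqrt (cav (\<lambda>i. (x i)\<^sup>2) n)) sequentially"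
  proof (intro always_eventually allI)
    fix n
    have "(cav (\<lambda>i. \<bar>x i\<bar>) n)\<^sup>2 \<le> cav (\<lambda>i. (x i)\<^sup>2) n"
      using cav_CS[of "\<lambda>i. \<bar>x i\<bar>" n] by simp
    then show "cav (\<lambda>i. \<bar>x i\<bar>) n \<le> sqrt (cav (\<lambda>i. (x i)\<^sup>2) n)"
      by (rule real_le_rsqrt)
  qed
  show "(\<lambda>n. sqrt (cav (\<lambda>i. (x i)\<^sup>2) n)) \<longlonglongrightarrow> 0"
    using tendsto_real_sqrt[OF assms] by simp
qed simp

lemma abs_to_pow:
  assumes lim: "(\<lambda>n. cav (\<lambda>i. \<bar>a i - c\<bar>) n) \<longlonglongrightarrow> 0"
    and a: "\<And>i. 0 \<le> a i \<and> a i \<le> 1" and c: "0 \<le> c" "c \<le> 1" and r: "r > 0"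
  shows "(\<lambda>n. cav (\<lambda>i. a i powr r) n) \<longlonglongrightarrow> c powr r"
proof (rule LIMSEQ_I)
  fix e :: real assume e: "e > 0"
  have cont: "continuous_on {0..} (\<lambda>x::real. x powr r)"
    using r by (intro continuous_on_powr') (auto intro: continuous_intros)
  obtain d where d: "d > 0" and dd: "\<And>x. x \<in> {0..} \<Longrightarrow> dist x c < d \<Longrightarrow> dist (x powr r) (c powr r) < e / 2"
    using cont c e unfolding continuous_on_iff by (metis atLeast_iff half_gt_zero)
  have pw: "\<bar>a i powr r - c powr r\<bar> \<le> e / 2 + \<bar>a i - c\<bar> / d" for i
  proof (cases "\<bar>a i - c\<bar> < d")
    case True
    then have "\<bar>a i powr r - c powr r\<bar> < e / 2" using dd[of "a i"] a[of i] by (simp add: dist_real_def)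
    moreover have "0 \<le> \<bar>a i - c\<bar> / d" using d by simp
    ultimately show ?thesis by linarith
  next
    case False
    have "a i powr r \<le> 1" "c powr r \<le> 1" using a[of i] c r by (auto intro: powr_le1)
    moreover have "0 \<le> a i powr r" "0 \<le> c powr r" by auto
    ultimately have "\<bar>a i powr r - c powr r\<bar> \<le> 1" by linarith
    also have "1 \<le> \<bar>a i - c\<bar> / d" using False d by simp
    finally show ?thesis using e by linarith
  qed
  obtain N where N: "\<And>n. n \<ge> N \<Longrightarrow> norm (cav (\<lambda>i. \<bar>a i - c\<bar>) n - 0) < d * e / 2"
    using LIMSEQ_D[OF lim, of "d * e / 2"] d e by auto
  show "\<exists>N. \<forall>n\<ge>N. norm (cav (\<lambda>i. a i powr r) n - c powr r) < e"
  proof (intro exI[of _ "max N 1"] allI impI)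
    fix n assume n: "n \<ge> max N 1"
    have "\<bar>cav (\<lambda>i. a i powr r) n - c powr r\<bar> = \<bar>cav (\<lambda>i. a i powr r - c powr r) n\<bar>"
      using n by (simp add: cav_diff cav_const)
    also have "\<dots> \<le> cav (\<lambda>i. \<bar>a i powr r - c powr r\<bar>) n" by (rule cav_abs)
    also have "\<dots> \<le> cav (\<lambda>i. e / 2 + (1 / d) * \<bar>a i - c\<bar>) n" using pw by (intro cav_mono) simp
    also have "\<dots> = e / 2 + (1 / d) * cav (\<lambda>i. \<bar>a i - c\<bar>) n"
      using n unfolding cav_add cav_cmult by (simp only: cav_const)
    also have "\<dots> < e / 2 + (1 / d) * (d * e / 2)"
      using N[of n] n d cav_nonneg[of "\<lambda>i. \<bar>a i - c\<bar>" n] by (intro add_strict_left_mono mult_strict_left_mono) auto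
    also have "\<dots> = e" using d by simp
    finally show "norm (cav (\<lambda>i. a i powr r) n - c powr r) < e" by simp
  qed
qed

lemma half_to_sq:
  assumes a: "\<And>i. 0 \<le> a i \<and> a i \<le> 1" and c: "0 \<le> c" "c \<le> 1"
    and l1: "(\<lambda>n. cav a n) \<longlonglongrightarrow> c"
    and l2: "(\<lambda>n. cav (\<lambda>i. sqrt (a i)) n) \<longlonglongrightarrow> sqrt c"
  shows "(\<lambda>n. cav (\<lambda>i. (a i - c)\<^sup>2) n) \<longlonglongrightarrow> 0"
proof (rule tendsto_sandwich[where f="\<lambda>n. 0" and h="\<lambda>n. 4 * cav (\<lambda>i. (sqrt (a i) - sqrt c)\<^sup>2) n"])
  show "eventually (\<lambda>n. 0 \<le> cav (\<lambda>i. (a i - c)\<^sup>2) n) sequentially"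
    by (intro always_eventually allI cav_nonneg) simp
  have pw: "(a i - c)\<^sup>2 \<le> 4 * (sqrt (a i) - sqrt c)\<^sup>2" for i
  proof -
    have ai: "0 \<le> a i" "a i \<le> 1" using a[of i] by auto
    have "a i - c = (sqrt (a i) - sqrt c) * (sqrt (a i) + sqrt c)"
      using ai c by (simp add: algebra_simps)
    then have "(a i - c)\<^sup>2 = (sqrt (a i) - sqrt c)\<^sup>2 * (sqrt (a i) + sqrt c)\<^sup>2"
      by (simp add: power_mult_distrib)
    also have "\<dots> \<le> (sqrt (a i) - sqrt c)\<^sup>2 * 4"
    proof (rule mult_left_mono)
      have "sqrt (a i) \<le> 1" "sqrt c \<le> 1" using ai c by auto
      moreover have "0 \<le> sqrt (a i)" "0 \<le> sqrt c" using ai c by auto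
      ultimately have "sqrt (a i) + sqrt c \<le> 2" "0 \<le> sqrt (a i) + sqrt c" by linarith+
      then have "(sqrt (a i) + sqrt c)\<^sup>2 \<le> 2\<^sup>2" by (intro power_mono) auto
      then show "(sqrt (a i) + sqrt c)\<^sup>2 \<le> 4" by simp
    qed simp
    finally show ?thesis by simp
  qed
  show "eventually (\<lambda>n. cav (\<lambda>i. (a i - c)\<^sup>2) n \<le> 4 * cav (\<lambda>i. (sqrt (a i) - sqrt c)\<^sup>2) n) sequentially"
    using pw by (intro always_eventually allI) (simp add: cav_cmult[symmetric] cav_mono)
  have eq: "cav (\<lambda>i. (sqrt (a i) - sqrt c)\<^sup>2) n = cav a n - 2 * sqrt c * cav (\<lambda>i. sqrt (a i)) n + c"
    if "n \<ge> 1" for n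
  proof -
    have "(\<lambda>i. (sqrt (a i) - sqrt c)\<^sup>2) = (\<lambda>i. (a i - (2 * sqrt c) * sqrt (a i)) + c)"
      using a c by (intro ext) (simp add: power2_diff)
    then show ?thesis using that by (simp add: cav_add cav_diff cav_cmult cav_const)
  qed
  have "(\<lambda>n. 4 * (cav a n - 2 * sqrt c * cav (\<lambda>i. sqrt (a i)) n + c)) \<longlonglongrightarrow> 4 * (c - 2 * sqrt c * sqrt c + c)"
    by (intro tendsto_intros l1 l2)
  also have "4 * (c - 2 * sqrt c * sqrt c + c) = 0" using c by simp
  finally show "(\<lambda>n. 4 * cav (\<lambda>i. (sqrt (a i) - sqrt c)\<^sup>2) n) \<longlonglongrightarrow> 0"
  proof (rule Lim_transform_eventually)
    show "eventually (\<lambda>n. 4 * (cav a n - 2 * sqrt c * cav (\<lambda>i. sqrt (a i)) n + c) =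
       4 * cav (\<lambda>i. (sqrt (a i) - sqrt c)\<^sup>2) n) sequentially"
      using eventually_ge_at_top[of 1] by eventually_elim (simp add: eq)
  qed
qed simp

lemma r_to_half:
  assumes a: "\<And>i. 0 \<le> a i \<and> a i \<le> 1" and c: "0 \<le> c" "c \<le> 1" and r: "0 < r" "r \<le> 1/2"
    and l1: "(\<lambda>n. cav a n) \<longlonglongrightarrow> c"
    and l2: "(\<lambda>n. cav (\<lambda>i. a i powr r) n) \<longlonglongrightarrow> c powr r"
  shows "(\<lambda>n. cav (\<lambda>i. sqrt (a i)) n) \<longlonglongrightarrow> sqrt c"
proof (rule tendsto_sandwich[where f="\<lambda>n. (cav (\<lambda>i. a i powr r) n) powr (1 / (2 * r))"
      and h="\<lambda>n. sqrt (cav a n)"])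
  define q where "q = 1 / (2 * r)"
  have q: "q \<ge> 1" using r unfolding q_def by (simp add: field_simps)
  have rq: "r * q = 1 / 2" using r unfolding q_def by simp
  show "eventually (\<lambda>n. (cav (\<lambda>i. a i powr r) n) powr (1 / (2 * r)) \<le> cav (\<lambda>i. sqrt (a i)) n) sequentially"
    using eventually_ge_at_top[of 1]
  proof eventually_elim
    case (elim n)
    have "(cav (\<lambda>i. a i powr r) n) powr q \<le> cav (\<lambda>i. (a i powr r) powr q) n"
      by (rule cav_jensen[OF q _ elim]) simp
    also have "(\<lambda>i. (a i powr r) powr q) = (\<lambda>i. sqrt (a i))"
      using a by (intro ext) (simp add: powr_powr rq powr_half_sqrt)
    finally show ?case unfolding q_def .
  qed
  show "eventually (\<lambda>n. cav (\<lambda>i. sqrt (a i)) n \<le> sqrt (cav a n)) sequentially"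
  proof (intro always_eventually allI)
    fix n
    have "(cav (\<lambda>i. sqrt (a i)) n)\<^sup>2 \<le> cav (\<lambda>i. (sqrt (a i))\<^sup>2) n" by (rule cav_CS)
    also have "(\<lambda>i. (sqrt (a i))\<^sup>2) = a" using a by (intro ext) simp
    finally show "cav (\<lambda>i. sqrt (a i)) n \<le> sqrt (cav a n)" by (rule real_le_rsqrt)
  qed
  show "(\<lambda>n. sqrt (cav a n)) \<longlonglongrightarrow> sqrt c" by (intro tendsto_intros l1)
  have "(\<lambda>n. (cav (\<lambda>i. a i powr r) n) powr (1 / (2 * r))) \<longlonglongrightarrow> (c powr r) powr (1 / (2 * r))"
    using r by (intro tendsto_powr2[OF l2 tendsto_const] always_eventually allI cav_nonneg) auto
  also have "(c powr r) powr (1 / (2 * r)) = sqrt c" using r c by (simp add: powr_powr powr_half_sqrt)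
  finally show "(\<lambda>n. (cav (\<lambda>i. a i powr r) n) powr (1 / (2 * r))) \<longlonglongrightarrow> sqrt c" .
qed

lemma approx_lim:
  fixes a :: "nat \<Rightarrow> real"
  assumes "\<And>e. e > 0 \<Longrightarrow> \<exists>b L'. b \<longlonglongrightarrow> L' \<and> (\<forall>n. \<bar>a n - b n\<bar> \<le> e) \<and> \<bar>L - L'\<bar> \<le> e"
  shows "a \<longlonglongrightarrow> L"
proof (rule LIMSEQ_I)
  fix r :: real assume r: "r > 0"
  obtain b L' where b: "b \<longlonglongrightarrow> L'" and ab: "\<And>n. \<bar>a n - b n\<bar> \<le> r / 4" and L: "\<bar>L - L'\<bar> \<le> r / 4"
    using assms[of "r / 4"] r by auto
  obtain N where N: "\<And>n. n \<ge> N \<Longrightarrow> norm (b n - L') < r / 4"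
    using LIMSEQ_D[OF b, of "r / 4"] r by auto
  show "\<exists>N. \<forall>n\<ge>N. norm (a n - L) < r"
  proof (intro exI allI impI)
    fix n assume "n \<ge> N"
    then have "\<bar>b n - L'\<bar> < r / 4" using N by simp
    then show "norm (a n - L) < r" using ab[of n] L r unfolding real_norm_def by arith
  qed
qed

lemma cav_close: "(\<And>i. \<bar>f i - g i\<bar> \<le> e) \<Longrightarrow> e \<ge> 0 \<Longrightarrow> \<bar>cav f n - cav g n\<bar> \<le> e"
proof -
  assume h: "\<And>i. \<bar>f i - g i\<bar> \<le> e" "e \<ge> 0"
  show ?thesis
  proof (cases "n = 0")
    case False
    have "\<bar>cav f n - cav g n\<bar> = \<bar>cav (\<lambda>i. f i - g i) n\<bar>" by (simp add: cav_diff)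
    also have "\<dots> \<le> cav (\<lambda>i. \<bar>f i - g i\<bar>) n" by (rule cav_abs)
    also have "\<dots> \<le> cav (\<lambda>i. e) n" using h by (intro cav_mono) auto
    also have "\<dots> = e" using False by (simp add: cav_const)
    finally show ?thesis .
  qed (use h in \<open>simp add: cav_def\<close>)
qed




context mp_sys begin

definition corr :: "'a set \<Rightarrow> 'a set \<Rightarrow> nat \<Rightarrow> real" where
  "corr X Y i = prob (X \<inter> ((T^^i) -` Y \<inter> space M))"

lemma cesaro_cav: "cesaro M T X Y \<longleftrightarrow> (\<lambda>n. cav (corr X Y) n) \<longlonglongrightarrow> prob X * prob Y"
  unfolding cesaro_def cav_def corr_def ..

lemma pre_sets[measurable]: "Y \<in> sets M \<Longrightarrow> (T^^i) -` Y \<inter> space M \<in> sets M"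
  by measurable

lemma corr_nonneg: "0 \<le> corr X Y i" unfolding corr_def by simp

lemma corr_le1: "X \<in> sets M \<Longrightarrow> corr X Y i \<le> prob X"
  unfolding corr_def by (intro finite_measure_mono) auto

lemma corr_le2: "Y \<in> sets M \<Longrightarrow> corr X Y i \<le> prob Y"
proof -
  assume Y: "Y \<in> sets M"
  have "corr X Y i \<le> prob ((T^^i) -` Y \<inter> space M)"
    unfolding corr_def using Y by (intro finite_measure_mono) auto
  then show ?thesis using meas_Tn[OF Y] by simp
qed

lemma corr_compl1:
  assumes X: "X \<in> sets M" and Y: "Y \<in> sets M"
  shows "corr (space M - X) Y i = prob Y - corr X Y i"
proof -
  define P where "P = (T^^i) -` Y \<inter> space M"
  have P: "P \<in> sets M" unfolding P_def using Y by simp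
  have "(space M - X) \<inter> P = P - (X \<inter> P)" unfolding P_def by auto
  then have "prob ((space M - X) \<inter> P) = prob P - prob (X \<inter> P)"
    using P X by (simp add: finite_measure_Diff)
  then show ?thesis unfolding corr_def P_def[symmetric] using meas_Tn[OF Y] by (simp add: P_def)
qed

lemma corr_compl2:
  assumes X: "X \<in> sets M" and Y: "Y \<in> sets M"
  shows "corr X (space M - Y) i = prob X - corr X Y i"
proof -
  define P where "P = (T^^i) -` Y \<inter> space M"
  have P: "P \<in> sets M" unfolding P_def using Y by simp
  have "(T^^i) -` (space M - Y) \<inter> space M = space M - P"
    unfolding P_def using Tn_space by auto
  moreover have "X \<inter> (space M - P) = X - (X \<inter> P)" using sets.sets_into_space[OF X] by auto
  ultimately have "corr X (space M - Y) i = prob (X - (X \<inter> P))" unfolding corr_def by simp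
  also have "\<dots> = prob X - prob (X \<inter> P)" using X P by (simp add: finite_measure_Diff)
  finally show ?thesis unfolding corr_def P_def .
qed

lemma corr_union1:
  assumes "A \<in> sets M" "B \<in> sets M" "A \<inter> B = {}" "Y \<in> sets M"
  shows "corr (A \<union> B) Y i = corr A Y i + corr B Y i"
proof -
  have "(A \<union> B) \<inter> ((T^^i) -` Y \<inter> space M) = (A \<inter> ((T^^i) -` Y \<inter> space M)) \<union> (B \<inter> ((T^^i) -` Y \<inter> space M))"
    by auto
  then show ?thesis unfolding corr_def using assms
    by (simp add: finite_measure_Union Int_Un_distrib2 disjoint_iff)
qed

lemma corr_union2:
  assumes "A \<in> sets M" "B \<in> sets M" "A \<inter> B = {}" "X \<in> sets M"
  shows "corr X (A \<union> B) i = corr X A i + corr X B i"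
proof -
  have "X \<inter> ((T^^i) -` (A \<union> B) \<inter> space M) = (X \<inter> ((T^^i) -` A \<inter> space M)) \<union> (X \<inter> ((T^^i) -` B \<inter> space M))"
    by auto
  moreover have "prob ((X \<inter> ((T^^i) -` A \<inter> space M)) \<union> (X \<inter> ((T^^i) -` B \<inter> space M))) =
      prob (X \<inter> ((T^^i) -` A \<inter> space M)) + prob (X \<inter> ((T^^i) -` B \<inter> space M))"
    using assms by (intro finite_measure_Union) auto
  ultimately show ?thesis unfolding corr_def by simp
qed

lemma corr_diff1:
  assumes "X \<in> sets M" "X' \<in> sets M" "X' \<subseteq> X" "Y \<in> sets M"
  shows "\<bar>corr X Y i - corr X' Y i\<bar> \<le> prob (X - X')"
proof -
  have "X = X' \<union> (X - X')" "X' \<inter> (X - X') = {}" using assms by auto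
  then have "corr X Y i = corr X' Y i + corr (X - X') Y i"
    using corr_union1[of X' "X - X'" Y i] assms by auto
  then show ?thesis using corr_le1[of "X - X'" Y i] corr_nonneg[of "X - X'" Y i] assms by auto
qed

lemma corr_diff2:
  assumes "Y \<in> sets M" "Y' \<in> sets M" "Y' \<subseteq> Y" "X \<in> sets M"
  shows "\<bar>corr X Y i - corr X Y' i\<bar> \<le> prob (Y - Y')"
proof -
  have "Y = Y' \<union> (Y - Y')" "Y' \<inter> (Y - Y') = {}" using assms by auto
  then have "corr X Y i = corr X Y' i + corr X (Y - Y') i"
    using corr_union2[of Y' "Y - Y'" X i] assms by auto
  then show ?thesis using corr_le2[of "Y - Y'" X i] corr_nonneg[of X "Y - Y'" i] assms by auto
qed

lemma ces_empty1: "cesaro M T {} Y"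
proof -
  have "corr {} Y = (\<lambda>i. 0)" by (rule ext) (simp add: corr_def)
  then show ?thesis unfolding cesaro_cav using cav_const_lim[of 0] by simp
qed

lemma ces_empty2: "cesaro M T X {}"
proof -
  have "corr X {} = (\<lambda>i. 0)" by (rule ext) (simp add: corr_def)
  then show ?thesis unfolding cesaro_cav using cav_const_lim[of 0] by simp
qed

lemma ces_compl1:
  assumes X: "X \<in> sets M" and Y: "Y \<in> sets M" and c: "cesaro M T X Y"
  shows "cesaro M T (space M - X) Y"
proof -
  have l: "(\<lambda>n. cav (\<lambda>i. prob Y) n - cav (corr X Y) n) \<longlonglongrightarrow> prob Y - prob X * prob Y"
    using c unfolding cesaro_cav by (intro tendsto_diff cav_const_lim)
  have "cav (corr (space M - X) Y) = (\<lambda>n. cav (\<lambda>i. prob Y) n - cav (corr X Y) n)"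
    using ext[of "corr (space M - X) Y" "\<lambda>i. prob Y - corr X Y i", OF corr_compl1[OF X Y]] by (intro ext) (simp add: cav_diff[symmetric])
  moreover have "prob Y - prob X * prob Y = prob (space M - X) * prob Y"
    unfolding prob_compl[OF X] by (simp add: algebra_simps)
  ultimately show ?thesis using l unfolding cesaro_cav by simp
qed

lemma ces_compl2:
  assumes X: "X \<in> sets M" and Y: "Y \<in> sets M" and c: "cesaro M T X Y"
  shows "cesaro M T X (space M - Y)"
proof -
  have l: "(\<lambda>n. cav (\<lambda>i. prob X) n - cav (corr X Y) n) \<longlonglongrightarrow> prob X - prob X * prob Y"
    using c unfolding cesaro_cav by (intro tendsto_diff cav_const_lim)
  have "cav (corr X (space M - Y)) = (\<lambda>n. cav (\<lambda>i. prob X) n - cav (corr X Y) n)"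
    using ext[of "corr X (space M - Y)" "\<lambda>i. prob X - corr X Y i", OF corr_compl2[OF X Y]] by (intro ext) (simp add: cav_diff[symmetric])
  moreover have "prob X - prob X * prob Y = prob X * prob (space M - Y)"
    unfolding prob_compl[OF Y] by (simp add: algebra_simps)
  ultimately show ?thesis using l unfolding cesaro_cav by simp
qed

lemma ces_union1:
  assumes "A \<in> sets M" "B \<in> sets M" "A \<inter> B = {}" "Y \<in> sets M" "cesaro M T A Y" "cesaro M T B Y"
  shows "cesaro M T (A \<union> B) Y"
proof -
  have "(\<lambda>n. cav (corr A Y) n + cav (corr B Y) n) \<longlonglongrightarrow> prob A * prob Y + prob B * prob Y"
    using assms unfolding cesaro_cav by (intro tendsto_add)
  moreover have "cav (corr (A \<union> B) Y) = (\<lambda>n. cav (corr A Y) n + cav (corr B Y) n)"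
    using ext[of "corr (A \<union> B) Y" "\<lambda>i. corr A Y i + corr B Y i", OF corr_union1[OF assms(1-4)]] by (intro ext) (simp add: cav_add[symmetric])
  moreover have "prob (A \<union> B) = prob A + prob B" using assms by (intro finite_measure_Union)
  ultimately show ?thesis unfolding cesaro_cav by (simp add: algebra_simps)
qed

lemma ces_union2:
  assumes "A \<in> sets M" "B \<in> sets M" "A \<inter> B = {}" "X \<in> sets M" "cesaro M T X A" "cesaro M T X B"
  shows "cesaro M T X (A \<union> B)"
proof -
  have "(\<lambda>n. cav (corr X A) n + cav (corr X B) n) \<longlonglongrightarrow> prob X * prob A + prob X * prob B"
    using assms unfolding cesaro_cav by (intro tendsto_add)
  moreover have "cav (corr X (A \<union> B)) = (\<lambda>n. cav (corr X A) n + cav (corr X B) n)"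
    using ext[of "corr X (A \<union> B)" "\<lambda>i. corr X A i + corr X B i", OF corr_union2[OF assms(1-4)]] by (intro ext) (simp add: cav_add[symmetric])
  moreover have "prob (A \<union> B) = prob A + prob B" using assms by (intro finite_measure_Union)
  ultimately show ?thesis unfolding cesaro_cav by (simp add: algebra_simps)
qed

lemma union_approx:
  fixes A :: "nat \<Rightarrow> 'a set"
  assumes A: "range A \<subseteq> sets M" and e: "e > 0"
  shows "\<exists>K. prob (\<Union>i. A i) - prob (\<Union>i<K. A i) \<le> e"
proof -
  have "(\<lambda>K. prob (\<Union>i<K. A i)) \<longlonglongrightarrow> prob (\<Union>K. \<Union>i<K. A i)"
    using A by (intro finite_Lim_measure_incseq) (auto simp: incseq_def intro: less_le_trans)
  moreover have "(\<Union>K. \<Union>i<K. A i) = (\<Union>i. A i)" by auto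
  ultimately have "(\<lambda>K. prob (\<Union>i<K. A i)) \<longlonglongrightarrow> prob (\<Union>i. A i)" by simp
  then obtain K where "\<bar>prob (\<Union>i<K. A i) - prob (\<Union>i. A i)\<bar> < e"
    using LIMSEQ_D[of _ "prob (\<Union>i. A i)" e] e by (auto simp: dist_real_def)
  then show ?thesis by (intro exI[of _ K]) simp
qed

lemma ces_Union1:
  fixes A :: "nat \<Rightarrow> 'a set"
  assumes A: "range A \<subseteq> sets M" "disjoint_family A" and Y: "Y \<in> sets M"
    and c: "\<And>i. cesaro M T (A i) Y"
  shows "cesaro M T (\<Union>i. A i) Y"
proof -
  have Asets: "A i \<in> sets M" for i using A by auto
  have fin: "cesaro M T (\<Union>i<K. A i) Y" for K
  proof (induction K)
    case 0 then show ?case by (simp add: ces_empty1)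
  next
    case (Suc K)
    have "(\<Union>i<Suc K. A i) = (\<Union>i<K. A i) \<union> A K" by (auto simp: lessThan_Suc)
    moreover have "(\<Union>i<K. A i) \<inter> A K = {}"
    proof -
      have "A i \<inter> A K = {}" if "i < K" for i using A(2) that unfolding disjoint_family_on_def by auto
      then show ?thesis by blast
    qed
    ultimately show ?case using Suc c[of K] Asets Y by (auto intro!: ces_union1)
  qed
  let ?U = "\<Union>i. A i"
  have U: "?U \<in> sets M" using A by auto
  show ?thesis unfolding cesaro_cav
  proof (rule approx_lim)
    fix e :: real assume e: "e > 0"
    obtain K where K: "prob ?U - prob (\<Union>i<K. A i) \<le> e" using union_approx[OF A(1) e] by blast
    have UK: "(\<Union>i<K. A i) \<in> sets M" "(\<Union>i<K. A i) \<subseteq> ?U" using Asets by auto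
    have pd: "prob (?U - (\<Union>i<K. A i)) = prob ?U - prob (\<Union>i<K. A i)"
      using UK U by (intro finite_measure_Diff)
    have "\<bar>cav (corr ?U Y) n - cav (corr (\<Union>i<K. A i) Y) n\<bar> \<le> e" for n
      using corr_diff1[OF U UK(1) UK(2) Y] pd K e by (intro cav_close) (auto intro: order_trans)
    moreover have "\<bar>prob ?U * prob Y - prob (\<Union>i<K. A i) * prob Y\<bar> \<le> e"
    proof -
      have "0 \<le> prob ?U - prob (\<Union>i<K. A i)" using pd by (metis measure_nonneg)
      moreover have "prob Y \<le> 1" by simp
      ultimately have "(prob ?U - prob (\<Union>i<K. A i)) * prob Y \<le> prob ?U - prob (\<Union>i<K. A i)"
        by (simp add: mult_left_le)
      then show ?thesis using K \<open>0 \<le> prob ?U - prob (\<Union>i<K. A i)\<close>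
        by (simp add: left_diff_distrib[symmetric])
    qed
    ultimately show "\<exists>b L'. b \<longlonglongrightarrow> L' \<and> (\<forall>n. \<bar>cav (corr ?U Y) n - b n\<bar> \<le> e) \<and> \<bar>prob ?U * prob Y - L'\<bar> \<le> e"
      using fin[of K] unfolding cesaro_cav by blast
  qed
qed

lemma ces_Union2:
  fixes A :: "nat \<Rightarrow> 'a set"
  assumes A: "range A \<subseteq> sets M" "disjoint_family A" and X: "X \<in> sets M"
    and c: "\<And>i. cesaro M T X (A i)"
  shows "cesaro M T X (\<Union>i. A i)"
proof -
  have Asets: "A i \<in> sets M" for i using A by auto
  have fin: "cesaro M T X (\<Union>i<K. A i)" for K
  proof (induction K)
    case 0 then show ?case by (simp add: ces_empty2)
  next
    case (Suc K)
    have "(\<Union>i<Suc K. A i) = (\<Union>i<K. A i) \<union> A K" by (auto simp: lessThan_Suc)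
    moreover have "(\<Union>i<K. A i) \<inter> A K = {}"
    proof -
      have "A i \<inter> A K = {}" if "i < K" for i using A(2) that unfolding disjoint_family_on_def by auto
      then show ?thesis by blast
    qed
    ultimately show ?case using Suc c[of K] Asets X by (auto intro!: ces_union2)
  qed
  let ?U = "\<Union>i. A i"
  have U: "?U \<in> sets M" using A by auto
  show ?thesis unfolding cesaro_cav
  proof (rule approx_lim)
    fix e :: real assume e: "e > 0"
    obtain K where K: "prob ?U - prob (\<Union>i<K. A i) \<le> e" using union_approx[OF A(1) e] by blast
    have UK: "(\<Union>i<K. A i) \<in> sets M" "(\<Union>i<K. A i) \<subseteq> ?U" using Asets by auto
    have pd: "prob (?U - (\<Union>i<K. A i)) = prob ?U - prob (\<Union>i<K. A i)"
      using UK U by (intro finite_measure_Diff)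
    have "\<bar>cav (corr X ?U) n - cav (corr X (\<Union>i<K. A i)) n\<bar> \<le> e" for n
      using corr_diff2[OF U UK(1) UK(2) X] pd K e by (intro cav_close) (auto intro: order_trans)
    moreover have "\<bar>prob X * prob ?U - prob X * prob (\<Union>i<K. A i)\<bar> \<le> e"
    proof -
      have "0 \<le> prob ?U - prob (\<Union>i<K. A i)" using pd by (metis measure_nonneg)
      moreover have "prob X \<le> 1" by simp
      ultimately have "prob X * (prob ?U - prob (\<Union>i<K. A i)) \<le> prob ?U - prob (\<Union>i<K. A i)"
        by (simp add: mult_left_le_one_le)
      then show ?thesis using K \<open>0 \<le> prob ?U - prob (\<Union>i<K. A i)\<close>
        by (simp add: right_diff_distrib[symmetric])
    qed
    ultimately show "\<exists>b L'. b \<longlonglongrightarrow> L' \<and> (\<forall>n. \<bar>cav (corr X ?U) n - b n\<bar> \<le> e) \<and> \<bar>prob X * prob ?U - L'\<bar> \<le> e"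
      using fin[of K] unfolding cesaro_cav by blast
  qed
qed

lemma ces_all:
  assumes G: "Int_stable G" "G \<subseteq> Pow (space M)" "sets M = sigma_sets (space M) G"
    and base: "\<And>X Y. X \<in> G \<Longrightarrow> Y \<in> G \<Longrightarrow> cesaro M T X Y"
    and X: "X \<in> sets M" and Y: "Y \<in> sets M"
  shows "cesaro M T X Y"
proof -
  have GS: "Z \<in> G \<Longrightarrow> Z \<in> sets M" for Z using G(3) by auto
  have step1: "cesaro M T X' Y'" if Y': "Y' \<in> G" and X': "X' \<in> sets M" for X' Y'
  proof -
    from X' have XS: "X' \<in> sigma_sets (space M) G" using G(3) by simp
    show ?thesis
    proof (rule sigma_sets_induct_disjoint[OF G(1) G(2) XS])
      fix A assume "A \<in> G" then show "cesaro M T A Y'" using base Y' by blast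
    next
      show "cesaro M T {} Y'" by (rule ces_empty1)
    next
      fix A assume "A \<in> sigma_sets (space M) G" "cesaro M T A Y'"
      then show "cesaro M T (space M - A) Y'" using ces_compl1 GS[OF Y'] G(3) by auto
    next
      fix A :: "nat \<Rightarrow> 'a set"
      assume "disjoint_family A" "range A \<subseteq> sigma_sets (space M) G" "\<And>i. cesaro M T (A i) Y'"
      then show "cesaro M T (\<Union>i. A i) Y'" using ces_Union1 GS[OF Y'] G(3) by auto
    qed
  qed
  from Y have YS: "Y \<in> sigma_sets (space M) G" using G(3) by simp
  show ?thesis
  proof (rule sigma_sets_induct_disjoint[OF G(1) G(2) YS])
    fix A assume "A \<in> G" then show "cesaro M T X A" using step1 X by blast
  next
    show "cesaro M T X {}" by (rule ces_empty2)
  next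
    fix A assume "A \<in> sigma_sets (space M) G" "cesaro M T X A"
    then show "cesaro M T X (space M - A)" using ces_compl2 X G(3) by auto
  next
    fix A :: "nat \<Rightarrow> 'a set"
    assume "disjoint_family A" "range A \<subseteq> sigma_sets (space M) G" "\<And>i. cesaro M T X (A i)"
    then show "cesaro M T X (\<Union>i. A i)" using ces_Union2 X G(3) by auto
  qed
qed

lemma ces_inv:
  assumes A: "A \<in> sets M" and inv: "T -` A \<inter> space M = A" and c: "cesaro M T A A"
  shows "prob A = 0 \<or> prob A = 1"
proof -
  have "corr A A = (\<lambda>i. prob A)"
  proof (rule ext)
    fix i
    have "A \<inter> ((T^^i) -` A \<inter> space M) = A"
      using inv_iter[OF inv] sets.sets_into_space[OF A] by auto
    then show "corr A A i = prob A" unfolding corr_def by simp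
  qed
  then have "(\<lambda>n. cav (corr A A) n) \<longlonglongrightarrow> prob A" using cav_const_lim[of "prob A"] by simp
  moreover have "(\<lambda>n. cav (corr A A) n) \<longlonglongrightarrow> prob A * prob A" using c unfolding cesaro_cav .
  ultimately have "prob A = prob A * prob A" by (rule LIMSEQ_unique)
  then show ?thesis by (metis mult_cancel_left1 mult.commute)
qed

end



lemma prod_lim:
  assumes a: "\<And>i. 0 \<le> a i \<and> a i \<le> 1" and a': "\<And>i. 0 \<le> a' i \<and> a' i \<le> 1"
    and c: "0 \<le> c" "c \<le> 1" and c': "0 \<le> c'" "c' \<le> 1"
    and l: "(\<lambda>n. cav (\<lambda>i. \<bar>a i - c\<bar>) n) \<longlonglongrightarrow> 0" and l': "(\<lambda>n. cav (\<lambda>i. \<bar>a' i - c'\<bar>) n) \<longlonglongrightarrow> 0"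
  shows "(\<lambda>n. cav (\<lambda>i. a i * a' i) n) \<longlonglongrightarrow> c * c'"
proof -
  have pw: "\<bar>a i * a' i - c * c'\<bar> \<le> \<bar>a i - c\<bar> + \<bar>a' i - c'\<bar>" for i
  proof -
    have "a i * a' i - c * c' = (a i - c) * a' i + c * (a' i - c')" by (simp add: algebra_simps)
    then have "\<bar>a i * a' i - c * c'\<bar> \<le> \<bar>a i - c\<bar> * \<bar>a' i\<bar> + \<bar>c\<bar> * \<bar>a' i - c'\<bar>"
      by (simp add: abs_mult[symmetric] abs_triangle_ineq)
    also have "\<dots> \<le> \<bar>a i - c\<bar> * 1 + 1 * \<bar>a' i - c'\<bar>"
      using a'[of i] c by (intro add_mono mult_left_mono mult_right_mono) auto
    finally show ?thesis by simp
  qed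
  have "(\<lambda>n. cav (\<lambda>i. a i * a' i) n - c * c') \<longlonglongrightarrow> 0"
  proof (rule Lim_null_comparison[where g="\<lambda>n. cav (\<lambda>i. \<bar>a i - c\<bar>) n + cav (\<lambda>i. \<bar>a' i - c'\<bar>) n"])
    show "eventually (\<lambda>n. norm (cav (\<lambda>i. a i * a' i) n - c * c') \<le>
        cav (\<lambda>i. \<bar>a i - c\<bar>) n + cav (\<lambda>i. \<bar>a' i - c'\<bar>) n) sequentially"
      using eventually_ge_at_top[of 1]
    proof eventually_elim
      case (elim n)
      have "norm (cav (\<lambda>i. a i * a' i) n - c * c') = \<bar>cav (\<lambda>i. a i * a' i - c * c') n\<bar>"
        using elim by (simp add: cav_diff cav_const)
      also have "\<dots> \<le> cav (\<lambda>i. \<bar>a i * a' i - c * c'\<bar>) n" by (rule cav_abs)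
      also have "\<dots> \<le> cav (\<lambda>i. \<bar>a i - c\<bar> + \<bar>a' i - c'\<bar>) n" using pw by (intro cav_mono)
      also have "\<dots> = cav (\<lambda>i. \<bar>a i - c\<bar>) n + cav (\<lambda>i. \<bar>a' i - c'\<bar>) n" by (rule cav_add)
      finally show ?case .
    qed
    show "(\<lambda>n. cav (\<lambda>i. \<bar>a i - c\<bar>) n + cav (\<lambda>i. \<bar>a' i - c'\<bar>) n) \<longlonglongrightarrow> 0"
      using tendsto_add[OF l l'] by simp
  qed
  from tendsto_add[OF this tendsto_const[of "c * c'"]] show ?thesis by simp
qed

lemma prod_sys:
  assumes "mp_sys M T"
  shows "mp_sys (M \<Otimes>\<^sub>M M) (\<lambda>(x, y). (T x, T y))"
proof -
  interpret mp_sys M T by fact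
  have PS: "prob_space (M \<Otimes>\<^sub>M M)" by (intro prob_space_pair prob_space_axioms)
  have Sm: "(\<lambda>(x, y). (T x, T y)) \<in> M \<Otimes>\<^sub>M M \<rightarrow>\<^sub>M M \<Otimes>\<^sub>M M" by measurable
  have "distr M M T \<Otimes>\<^sub>M distr M M T = distr (M \<Otimes>\<^sub>M M) (M \<Otimes>\<^sub>M M) (\<lambda>(x, y). (T x, T y))"
    by (rule pair_measure_distr[OF Tm Tm]) (simp add: distr_T prob_space_imp_sigma_finite prob_space_axioms)
  then have D: "distr (M \<Otimes>\<^sub>M M) (M \<Otimes>\<^sub>M M) (\<lambda>(x, y). (T x, T y)) = M \<Otimes>\<^sub>M M"
    by (simp add: distr_T)
  show ?thesis
  proof (unfold mp_sys_def mp_sys_axioms_def, intro conjI PS Sm allI impI)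
    fix A assume A: "A \<in> sets (M \<Otimes>\<^sub>M M)"
    have "measure (distr (M \<Otimes>\<^sub>M M) (M \<Otimes>\<^sub>M M) (\<lambda>(x, y). (T x, T y))) A =
        measure (M \<Otimes>\<^sub>M M) ((\<lambda>(x, y). (T x, T y)) -` A \<inter> space (M \<Otimes>\<^sub>M M))"
      using A Sm by (intro measure_distr) auto
    then show "measure (M \<Otimes>\<^sub>M M) ((\<lambda>(x, y). (T x, T y)) -` A \<inter> space (M \<Otimes>\<^sub>M M)) = measure (M \<Otimes>\<^sub>M M) A"
      using D by simp
  qed
qed

lemma prod_iter:
  fixes T :: "'a \<Rightarrow> 'a"
  shows "((\<lambda>(x, y). (T x, T y)) ^^ i) = (\<lambda>(x, y). ((T^^i) x, (T^^i) y))"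
proof (induction i)
  case 0 then show ?case by (simp add: fun_eq_iff)
next
  case (Suc i)
  show ?case by (rule ext) (simp add: Suc split: prod.splits)
qed

lemma (in prob_space) meas_times:
  assumes "A \<in> sets M" "B \<in> sets M"
  shows "measure (M \<Otimes>\<^sub>M M) (A \<times> B) = prob A * prob B"
proof -
  interpret sigma_finite_measure M by (rule prob_space_imp_sigma_finite) (rule prob_space_axioms)
  have "emeasure (M \<Otimes>\<^sub>M M) (A \<times> B) = ennreal (prob A * prob B)"
    using assms by (simp add: emeasure_pair_measure_Times emeasure_eq_measure ennreal_mult'')
  then show ?thesis by (simp add: measure_def)
qed

lemma prod_corr:
  assumes sys: "mp_sys M T" and S: "B1 \<in> sets M" "B2 \<in> sets M" "C1 \<in> sets M" "C2 \<in> sets M"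
  shows "mp_sys.corr (M \<Otimes>\<^sub>M M) (\<lambda>(x, y). (T x, T y)) (B1 \<times> B2) (C1 \<times> C2) i =
    mp_sys.corr M T B1 C1 i * mp_sys.corr M T B2 C2 i"
proof -
  interpret mp_sys M T by fact
  interpret P: mp_sys "M \<Otimes>\<^sub>M M" "\<lambda>(x, y). (T x, T y)" by (rule prod_sys[OF sys])
  have "(B1 \<times> B2) \<inter> (((\<lambda>(x, y). (T x, T y)) ^^ i) -` (C1 \<times> C2) \<inter> space (M \<Otimes>\<^sub>M M)) =
      (B1 \<inter> ((T^^i) -` C1 \<inter> space M)) \<times> (B2 \<inter> ((T^^i) -` C2 \<inter> space M))"
    unfolding prod_iter space_pair_measure by auto
  then show ?thesis unfolding P.corr_def corr_def using S by (simp add: meas_times)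
qed




lemma erg_sys_of: "mp_sys M T \<Longrightarrow> ergodic M T \<Longrightarrow> erg_sys M T"
  unfolding erg_sys_def erg_sys_axioms_def ergodic_def by auto

lemma (in mp_sys) corr_bnd: "X \<in> sets M \<Longrightarrow> 0 \<le> corr X Y i \<and> corr X Y i \<le> 1"
  using corr_nonneg[of X Y i] corr_le1[of X Y i] by (auto intro: order_trans)

lemma (in erg_sys) erg_cav:
  assumes "B \<in> sets M" "C \<in> sets M"
  shows "(\<lambda>n. cav (corr B C) n) \<longlonglongrightarrow> prob B * prob C"
  using erg_cesaro[OF assms] unfolding cav_def corr_def .

lemma wm_erg:
  assumes sys: "mp_sys M T" and wm: "weakly_mixing M T"
  shows "ergodic M T"
proof -
  interpret mp_sys M T by fact
  interpret P: mp_sys "M \<Otimes>\<^sub>M M" "\<lambda>(x, y). (T x, T y)" by (rule prod_sys[OF sys])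
  show ?thesis unfolding ergodic_def
  proof (intro ballI impI)
    fix A assume A: "A \<in> sets M" and inv: "T -` A \<inter> space M = A"
    have A': "A \<times> space M \<in> sets (M \<Otimes>\<^sub>M M)" using A by auto
    have "(\<lambda>(x, y). (T x, T y)) -` (A \<times> space M) \<inter> space (M \<Otimes>\<^sub>M M) = A \<times> space M"
    proof -
      have "x \<in> space M \<Longrightarrow> T x \<in> A \<longleftrightarrow> x \<in> A" for x using inv by blast
      then show ?thesis unfolding space_pair_measure using measurable_space[OF Tm]
        sets.sets_into_space[OF A] by auto
    qed
    then have "measure (M \<Otimes>\<^sub>M M) (A \<times> space M) = 0 \<or> measure (M \<Otimes>\<^sub>M M) (A \<times> space M) = 1"
      using wm A' unfolding weakly_mixing_def ergodic_def by blast
    moreover have "measure (M \<Otimes>\<^sub>M M) (A \<times> space M) = prob A"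
      using A by (simp add: meas_times prob_space)
    ultimately show "prob A = 0 \<or> prob A = 1" by simp
  qed
qed

lemma wm_sq:
  assumes sys: "mp_sys M T" and wm: "weakly_mixing M T" and B: "B \<in> sets M" and C: "C \<in> sets M"
  shows "(\<lambda>n. cav (\<lambda>i. (mp_sys.corr M T B C i - measure M B * measure M C)\<^sup>2) n) \<longlonglongrightarrow> 0"
proof -
  interpret mp_sys M T by fact
  interpret P: mp_sys "M \<Otimes>\<^sub>M M" "\<lambda>(x, y). (T x, T y)" by (rule prod_sys[OF sys])
  interpret E: erg_sys M T by (rule erg_sys_of[OF sys wm_erg[OF sys wm]])
  interpret EP: erg_sys "M \<Otimes>\<^sub>M M" "\<lambda>(x, y). (T x, T y)"
    by (rule erg_sys_of[OF prod_sys[OF sys]]) (use wm in \<open>simp add: weakly_mixing_def\<close>)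
  define c where "c = prob B * prob C"
  have l1: "(\<lambda>n. cav (corr B C) n) \<longlonglongrightarrow> c" unfolding c_def by (rule E.erg_cav[OF B C])
  have "(\<lambda>n. cav (P.corr (B \<times> B) (C \<times> C)) n) \<longlonglongrightarrow> measure (M \<Otimes>\<^sub>M M) (B \<times> B) * measure (M \<Otimes>\<^sub>M M) (C \<times> C)"
    using B C by (intro EP.erg_cav) auto
  moreover have "P.corr (B \<times> B) (C \<times> C) = (\<lambda>i. (corr B C i)\<^sup>2)"
    using prod_corr[OF sys B B C C] by (intro ext) (simp add: power2_eq_square)
  moreover have "measure (M \<Otimes>\<^sub>M M) (B \<times> B) * measure (M \<Otimes>\<^sub>M M) (C \<times> C) = c\<^sup>2"
    using B C by (simp add: meas_times c_def power2_eq_square)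
  ultimately have l2: "(\<lambda>n. cav (\<lambda>i. (corr B C i)\<^sup>2) n) \<longlonglongrightarrow> c\<^sup>2" by simp
  have eq: "cav (\<lambda>i. (corr B C i - c)\<^sup>2) n = cav (\<lambda>i. (corr B C i)\<^sup>2) n - 2 * c * cav (corr B C) n + c\<^sup>2"
    if "n \<ge> 1" for n
  proof -
    have "(\<lambda>i. (corr B C i - c)\<^sup>2) = (\<lambda>i. ((corr B C i)\<^sup>2 - (2 * c) * corr B C i) + c\<^sup>2)"
      by (intro ext) (simp add: power2_diff)
    then show ?thesis using that by (simp add: cav_add cav_diff cav_cmult cav_const)
  qed
  have "(\<lambda>n. cav (\<lambda>i. (corr B C i)\<^sup>2) n - 2 * c * cav (corr B C) n + c\<^sup>2) \<longlonglongrightarrow> c\<^sup>2 - 2 * c * c + c\<^sup>2"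
    by (intro tendsto_intros l1 l2)
  also have "c\<^sup>2 - 2 * c * c + c\<^sup>2 = 0" by (simp add: power2_eq_square)
  finally have "(\<lambda>n. cav (\<lambda>i. (corr B C i)\<^sup>2) n - 2 * c * cav (corr B C) n + c\<^sup>2) \<longlonglongrightarrow> 0" .
  then show ?thesis unfolding c_def[symmetric]
  proof (rule Lim_transform_eventually)
    show "eventually (\<lambda>n. cav (\<lambda>i. (corr B C i)\<^sup>2) n - 2 * c * cav (corr B C) n + c\<^sup>2 =
        cav (\<lambda>i. (corr B C i - c)\<^sup>2) n) sequentially"
      using eventually_ge_at_top[of 1] by eventually_elim (simp add: eq)
  qed
qed

lemma abs_wm:
  assumes sys: "mp_sys M T"
    and H: "\<And>B C. B \<in> sets M \<Longrightarrow> C \<in> sets M \<Longrightarrow>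
      (\<lambda>n. cav (\<lambda>i. \<bar>mp_sys.corr M T B C i - measure M B * measure M C\<bar>) n) \<longlonglongrightarrow> 0"
  shows "weakly_mixing M T"
proof -
  interpret mp_sys M T by fact
  interpret P: mp_sys "M \<Otimes>\<^sub>M M" "\<lambda>(x, y). (T x, T y)" by (rule prod_sys[OF sys])
  let ?G = "{a \<times> b | a b. a \<in> sets M \<and> b \<in> sets M}"
  have G1: "Int_stable ?G" by (rule Int_stable_pair_measure_generator)
  have G2: "?G \<subseteq> Pow (space (M \<Otimes>\<^sub>M M))"
    unfolding space_pair_measure using sets.sets_into_space by fastforce
  have G3: "sets (M \<Otimes>\<^sub>M M) = sigma_sets (space (M \<Otimes>\<^sub>M M)) ?G"
    unfolding space_pair_measure by (rule sets_pair_measure)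
  have base: "cesaro (M \<Otimes>\<^sub>M M) (\<lambda>(x, y). (T x, T y)) X Y" if XG: "X \<in> ?G" and YG: "Y \<in> ?G" for X Y
  proof -
    obtain B1 B2 where X: "X = B1 \<times> B2" "B1 \<in> sets M" "B2 \<in> sets M" using XG by auto
    obtain C1 C2 where Y: "Y = C1 \<times> C2" "C1 \<in> sets M" "C2 \<in> sets M" using YG by auto
    have "(\<lambda>n. cav (\<lambda>i. corr B1 C1 i * corr B2 C2 i) n) \<longlonglongrightarrow> (prob B1 * prob C1) * (prob B2 * prob C2)"
      using X Y by (intro prod_lim H corr_bnd) (auto intro: mult_le_one)
    moreover have "P.corr X Y = (\<lambda>i. corr B1 C1 i * corr B2 C2 i)"
      using prod_corr[OF sys X(2,3) Y(2,3)] X Y by (intro ext) simp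
    moreover have "measure (M \<Otimes>\<^sub>M M) X * measure (M \<Otimes>\<^sub>M M) Y = (prob B1 * prob C1) * (prob B2 * prob C2)"
      using X Y by (simp add: meas_times)
    ultimately show ?thesis unfolding P.cesaro_cav by simp
  qed
  show ?thesis unfolding weakly_mixing_def ergodic_def
  proof (intro ballI impI)
    fix A assume A: "A \<in> sets (M \<Otimes>\<^sub>M M)" and inv: "(\<lambda>(x, y). (T x, T y)) -` A \<inter> space (M \<Otimes>\<^sub>M M) = A"
    have "cesaro (M \<Otimes>\<^sub>M M) (\<lambda>(x, y). (T x, T y)) A A"
      using P.ces_all[OF G1 G2 G3 base A A] by blast
    then show "measure (M \<Otimes>\<^sub>M M) A = 0 \<or> measure (M \<Otimes>\<^sub>M M) A = 1"
      by (rule P.ces_inv[OF A inv])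
  qed
qed




theorem proposition6p3:
  fixes M :: "'a measure" and T :: "'a \<Rightarrow> 'a"
  assumes "mps M T"
  shows "(weakly_mixing M T \<longleftrightarrow>
            (\<forall>r>0. \<forall>B\<in>sets M. \<forall>C\<in>sets M. cesaro_pow M T r B C))
       \<and> (weakly_mixing M T \<longleftrightarrow>
            (\<forall>B\<in>sets M. \<forall>C\<in>sets M. cesaro M T B C \<and>
               (\<exists>r. 0 < r \<and> r \<le> 1/2 \<and> cesaro_pow M T r B C)))
       \<and> (weakly_mixing M T \<longleftrightarrow>
            ergodic M T \<and> (\<forall>B\<in>sets M. \<forall>C\<in>sets M. cesaro_pow M T (1/2) B C))"
proof -
  have sys: "mp_sys M T" using assms by (rule mps_imp)
  interpret mp_sys M T by (rule sys)
  have cb: "0 \<le> prob B * prob C" "prob B * prob C \<le> 1" for B C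
    by (auto intro: mult_le_one)
  have pow_iff: "cesaro_pow M T r B C \<longleftrightarrow>
      (\<lambda>n. cav (\<lambda>i. corr B C i powr r) n) \<longlonglongrightarrow> (prob B * prob C) powr r" for r B C
    unfolding cesaro_pow_def cav_def corr_def by (simp add: powr_mult)
  have abs_pow: "cesaro_pow M T r B C"
    if B: "B \<in> sets M" and C: "C \<in> sets M" and r: "r > 0"
      and l: "(\<lambda>n. cav (\<lambda>i. \<bar>corr B C i - prob B * prob C\<bar>) n) \<longlonglongrightarrow> 0" for B C r
    unfolding pow_iff using l corr_bnd[OF B] cb r by (intro abs_to_pow) auto
  have i_ii: "\<forall>r>0. \<forall>B\<in>sets M. \<forall>C\<in>sets M. cesaro_pow M T r B C" if wm: "weakly_mixing M T"
  proof (intro allI impI ballI)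
    fix r :: real and B C assume r: "r > 0" and B: "B \<in> sets M" and C: "C \<in> sets M"
    show "cesaro_pow M T r B C" by (rule abs_pow[OF B C r sq_to_abs[OF wm_sq[OF sys wm B C]]])
  qed
  have ii_iii: "\<forall>B\<in>sets M. \<forall>C\<in>sets M. cesaro M T B C \<and> (\<exists>r. 0 < r \<and> r \<le> 1/2 \<and> cesaro_pow M T r B C)"
    if H: "\<forall>r>0. \<forall>B\<in>sets M. \<forall>C\<in>sets M. cesaro_pow M T r B C"
  proof (intro ballI conjI)
    fix B C assume B: "B \<in> sets M" and C: "C \<in> sets M"
    show "\<exists>r. 0 < r \<and> r \<le> 1/2 \<and> cesaro_pow M T r B C"
      using H B C by (intro exI[of _ "1/2"]) auto
    have "cesaro_pow M T 1 B C" using H B C by auto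
    then show "cesaro M T B C"
      unfolding cesaro_pow_def cesaro_def by simp
  qed
  have iii_i: "weakly_mixing M T"
    if H: "\<forall>B\<in>sets M. \<forall>C\<in>sets M. cesaro M T B C \<and> (\<exists>r. 0 < r \<and> r \<le> 1/2 \<and> cesaro_pow M T r B C)"
  proof (rule abs_wm[OF sys])
    fix B C assume B: "B \<in> sets M" and C: "C \<in> sets M"
    obtain r where r: "0 < r" "r \<le> 1/2" and p: "cesaro_pow M T r B C" and c: "cesaro M T B C"
      using H B C by blast
    have l1: "(\<lambda>n. cav (corr B C) n) \<longlonglongrightarrow> prob B * prob C" using c unfolding cesaro_cav .
    have l2: "(\<lambda>n. cav (\<lambda>i. corr B C i powr r) n) \<longlonglongrightarrow> (prob B * prob C) powr r"
      using p unfolding pow_iff .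
    have "(\<lambda>n. cav (\<lambda>i. sqrt (corr B C i)) n) \<longlonglongrightarrow> sqrt (prob B * prob C)"
      using corr_bnd[OF B] cb r l1 l2 by (intro r_to_half) auto
    then have "(\<lambda>n. cav (\<lambda>i. (corr B C i - prob B * prob C)\<^sup>2) n) \<longlonglongrightarrow> 0"
      using corr_bnd[OF B] cb l1 by (intro half_to_sq) auto
    then show "(\<lambda>n. cav (\<lambda>i. \<bar>corr B C i - prob B * prob C\<bar>) n) \<longlonglongrightarrow> 0"
      by (rule sq_to_abs)
  qed
  have part3: "weakly_mixing M T"
    if E: "ergodic M T" and H: "\<forall>B\<in>sets M. \<forall>C\<in>sets M. cesaro_pow M T (1/2) B C"
  proof (rule iii_i)
    interpret erg_sys M T by (rule erg_sys_of[OF sys E])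
    show "\<forall>B\<in>sets M. \<forall>C\<in>sets M. cesaro M T B C \<and> (\<exists>r. 0 < r \<and> r \<le> 1/2 \<and> cesaro_pow M T r B C)"
    proof (intro ballI conjI)
      fix B C assume B: "B \<in> sets M" and C: "C \<in> sets M"
      show "cesaro M T B C" unfolding cesaro_def by (rule erg_cesaro[OF B C])
      show "\<exists>r. 0 < r \<and> r \<le> 1/2 \<and> cesaro_pow M T r B C"
        using H B C by (intro exI[of _ "1/2"]) auto
    qed
  qed
  have c1: "weakly_mixing M T \<longleftrightarrow> (\<forall>r>0. \<forall>B\<in>sets M. \<forall>C\<in>sets M. cesaro_pow M T r B C)"
  proof
    assume "weakly_mixing M T" then show "\<forall>r>0. \<forall>B\<in>sets M. \<forall>C\<in>sets M. cesaro_pow M T r B C" by (rule i_ii)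
  next
    assume "\<forall>r>0. \<forall>B\<in>sets M. \<forall>C\<in>sets M. cesaro_pow M T r B C"
    then show "weakly_mixing M T" by (intro iii_i ii_iii)
  qed
  have c2: "weakly_mixing M T \<longleftrightarrow> (\<forall>B\<in>sets M. \<forall>C\<in>sets M. cesaro M T B C \<and>
               (\<exists>r. 0 < r \<and> r \<le> 1/2 \<and> cesaro_pow M T r B C))"
  proof
    assume "weakly_mixing M T"
    then show "\<forall>B\<in>sets M. \<forall>C\<in>sets M. cesaro M T B C \<and> (\<exists>r. 0 < r \<and> r \<le> 1/2 \<and> cesaro_pow M T r B C)"
      by (intro ii_iii i_ii)
  next
    assume "\<forall>B\<in>sets M. \<forall>C\<in>sets M. cesaro M T B C \<and> (\<exists>r. 0 < r \<and> r \<le> 1/2 \<and> cesaro_pow M T r B C)"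
    then show "weakly_mixing M T" by (rule iii_i)
  qed
  have c3: "weakly_mixing M T \<longleftrightarrow> ergodic M T \<and> (\<forall>B\<in>sets M. \<forall>C\<in>sets M. cesaro_pow M T (1/2) B C)"
  proof
    assume wm: "weakly_mixing M T"
    have "ergodic M T" by (rule wm_erg[OF sys wm])
    moreover have "\<forall>B\<in>sets M. \<forall>C\<in>sets M. cesaro_pow M T (1/2) B C"
      using i_ii[OF wm] by simp
    ultimately show "ergodic M T \<and> (\<forall>B\<in>sets M. \<forall>C\<in>sets M. cesaro_pow M T (1/2) B C)" ..
  next
    assume "ergodic M T \<and> (\<forall>B\<in>sets M. \<forall>C\<in>sets M. cesaro_pow M T (1/2) B C)"
    then show "weakly_mixing M T" using part3 by blast
  qed
  show ?thesis using c1 c2 c3 by (intro conjI)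
qed



end
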